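(* Consider the hardware trojan detection game specified in the context. Under EUT there exists a fine value $F^v_{\mathrm{EUT}}$, and under PT there exists a fine value $F^v_{\mathrm{PT}}$, such that when $F$ equals that value, at the mixed-strategy Nash equilibrium neither the attacker nor the defender wins. That is, the equilibrium expected utilities of both players are equal to $0$.
   Context: <p><b>Players and strategies.</b> There are two players, an attacker $a$ and a defender $d$. The trojan types are $\mathcal{T}=\{A,B,C,D\}$, with damages $V_A=1$, $V_B=2$, $V_C=4$, $V_D=12$. Every type has the same fine $F$.</p> <p>The attacker's pure strategy set is $\mathcal{S}_a=\mathcal{T}$. The defender's pure strategy set $\mathcal{S}_d=\{AB,AC,AD,BC,BD,CD\}$ consists of the 2-element subsets of $\mathcal{T}$.</p> <p><b>Payoffs.</b> $u_d(s_d,s_a)=F$ if $s_a\in s_d$, and $u_d(s_d,s_a)=-V_{s_a}$ otherwise. The game is zero-sum: $u_a=-u_d$.</p> <p>Mixed strategies are probability vectors $\boldsymbol{p}_d$ on $\mathcal{S}_d$ and $\boldsymbol{p}_a$ on $\mathcal{S}_a$.</p> <p><b>EUT utility.</b> $U_i^{\mathrm{EUT}}(\boldsymbol{p}_d,\boldsymbol{p}_a)=\sum_{s_d,s_a}p_d(s_d)p_a(s_a)u_i(s_d,s_a)$.</p> <p><b>PT utility.</b> Each player $i$ has a parameter $\alpha_i\in(0,1]$ and the weighting function $w_i(p)=\exp(-(-\ln p)^{\alpha_i})$, with $w_i(0)=0$. For player $i$ with opponent $j$, $U_i^{\mathrm{PT}}(\boldsymbol{p}_i,\boldsymbol{p}_j)=\sum_{s_i,s_j}p_i(s_i)\,w_i(p_j(s_j))\,u_i(s_i,s_j)$.</p>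 <p><b>MSNE.</b> A mixed-strategy Nash equilibrium is a profile from which neither player can increase its utility ($U^{\mathrm{EUT}}$ or $U^{\mathrm{PT}}$, respectively) by unilateral deviation.</p> <p><b>Winning.</b> A player "wins" if its equilibrium expected utility is positive.</p> *)

theory Defs
  imports Complex_Main
begin

datatype trojan = TA | TB | TC | TD

fun dmg :: "trojan \<Rightarrow> real" where
  "dmg TA = 1" | "dmg TB = 2" | "dmg TC = 4" | "dmg TD = 12"

definition Sa :: "trojan set" where
  "Sa = {TA, TB, TC, TD}"

definition Sd :: "trojan set set" where
  "Sd = {{TA,TB}, {TA,TC}, {TA,TD}, {TB,TC}, {TB,TD}, {TC,TD}}"

definition ud :: "real \<Rightarrow> trojan set \<Rightarrow> trojan \<Rightarrow> real" where
  "ud F sd sa = (if sa \<in> sd then F else - dmg sa)"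

definition ua :: "real \<Rightarrow> trojan set \<Rightarrow> trojan \<Rightarrow> real" where
  "ua F sd sa = - ud F sd sa"

definition mixed :: "'s set \<Rightarrow> ('s \<Rightarrow> real) \<Rightarrow> bool" where
  "mixed S p \<longleftrightarrow> (\<forall>s\<in>S. 0 \<le> p s) \<and> sum p S = 1"

definition U_EUT_d :: "real \<Rightarrow> (trojan set \<Rightarrow> real) \<Rightarrow> (trojan \<Rightarrow> real) \<Rightarrow> real" where
  "U_EUT_d F pd pa = (\<Sum>sd\<in>Sd. \<Sum>sa\<in>Sa. pd sd * pa sa * ud F sd sa)"

definition U_EUT_a :: "real \<Rightarrow> (trojan set \<Rightarrow> real) \<Rightarrow> (trojan \<Rightarrow> real) \<Rightarrow> real" where
  "U_EUT_a F pd pa = (\<Sum>sd\<in>Sd. \<Sum>sa\<in>Sa. pd sd * pa sa * ua F sd sa)"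

definition wgt :: "real \<Rightarrow> real \<Rightarrow> real" where
  "wgt \<alpha> p = (if p = 0 then 0 else exp (- ((- ln p) powr \<alpha>)))"

definition U_PT_d :: "real \<Rightarrow> real \<Rightarrow> (trojan set \<Rightarrow> real) \<Rightarrow> (trojan \<Rightarrow> real) \<Rightarrow> real" where
  "U_PT_d \<alpha>d F pd pa = (\<Sum>sd\<in>Sd. \<Sum>sa\<in>Sa. pd sd * wgt \<alpha>d (pa sa) * ud F sd sa)"

definition U_PT_a :: "real \<Rightarrow> real \<Rightarrow> (trojan set \<Rightarrow> real) \<Rightarrow> (trojan \<Rightarrow> real) \<Rightarrow> real" where
  "U_PT_a \<alpha>a F pd pa = (\<Sum>sa\<in>Sa. \<Sum>sd\<in>Sd. pa sa * wgt \<alpha>a (pd sd) * ua F sd sa)"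

definition is_MSNE ::
  "((trojan set \<Rightarrow> real) \<Rightarrow> (trojan \<Rightarrow> real) \<Rightarrow> real) \<Rightarrow>
   ((trojan set \<Rightarrow> real) \<Rightarrow> (trojan \<Rightarrow> real) \<Rightarrow> real) \<Rightarrow>
   (trojan set \<Rightarrow> real) \<Rightarrow> (trojan \<Rightarrow> real) \<Rightarrow> bool" where
  "is_MSNE Ud Ua pd pa \<longleftrightarrow>
     mixed Sd pd \<and> mixed Sa pa \<and>
     (\<forall>pd'. mixed Sd pd' \<longrightarrow> Ud pd' pa \<le> Ud pd pa) \<and>
     (\<forall>pa'. mixed Sa pa' \<longrightarrow> Ua pd pa' \<le> Ua pd pa)"

definition MSNE_EUT :: "real \<Rightarrow> (trojan set \<Rightarrow> real) \<Rightarrow> (trojan \<Rightarrow> real) \<Rightarrow> bool" where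
  "MSNE_EUT F = is_MSNE (U_EUT_d F) (U_EUT_a F)"

definition MSNE_PT :: "real \<Rightarrow> real \<Rightarrow> real \<Rightarrow> (trojan set \<Rightarrow> real) \<Rightarrow> (trojan \<Rightarrow> real) \<Rightarrow> bool" where
  "MSNE_PT \<alpha>d \<alpha>a F = is_MSNE (U_PT_d \<alpha>d F) (U_PT_a \<alpha>a F)"

end

theory Submission
  imports Defs
begin


definition Udg :: "(real \<Rightarrow> real) \<Rightarrow> real \<Rightarrow> (trojan set \<Rightarrow> real) \<Rightarrow> (trojan \<Rightarrow> real) \<Rightarrow> real" where
  "Udg fd F pd pa = (\<Sum>sd\<in>Sd. \<Sum>sa\<in>Sa. pd sd * fd (pa sa) * ud F sd sa)"

definition Uag :: "(real \<Rightarrow> real) \<Rightarrow> real \<Rightarrow> (trojan set \<Rightarrow> real) \<Rightarrow> (trojan \<Rightarrow> real) \<Rightarrow> real" where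
  "Uag fa F pd pa = (\<Sum>sa\<in>Sa. \<Sum>sd\<in>Sd. pa sa * fa (pd sd) * ua F sd sa)"

lemma finSd: "finite Sd" by (simp add: Sd_def)
lemma finSa: "finite Sa" by (simp add: Sa_def)

lemma Udg_alt: "Udg fd F pd pa = (\<Sum>sd\<in>Sd. pd sd * (\<Sum>t\<in>Sa. fd (pa t) * ud F sd t))"
  unfolding Udg_def by (simp add: sum_distrib_left mult.assoc)

lemma Uag_alt: "Uag fa F pd pa = (\<Sum>t\<in>Sa. pa t * (\<Sum>sd\<in>Sd. fa (pd sd) * ua F sd t))"
  unfolding Uag_def by (simp add: sum_distrib_left mult.assoc)

lemma EUT_eq: "U_EUT_d F = Udg (\<lambda>x. x) F" "U_EUT_a F = Uag (\<lambda>x. x) F"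
proof -
  show "U_EUT_d F = Udg (\<lambda>x. x) F" unfolding U_EUT_d_def Udg_def by simp
  show "U_EUT_a F = Uag (\<lambda>x. x) F"
  proof (intro ext)
    fix pd pa
    show "U_EUT_a F pd pa = Uag (\<lambda>x. x) F pd pa"
      unfolding U_EUT_a_def Uag_def by (subst sum.swap) (simp add: ac_simps)
  qed
qed

lemma PT_eq: "U_PT_d a F = Udg (wgt a) F" "U_PT_a a F = Uag (wgt a) F"
  unfolding U_PT_d_def U_PT_a_def Udg_def Uag_def by (auto intro!: ext)

lemma sum_ind: "finite S \<Longrightarrow> s \<in> S \<Longrightarrow> (\<Sum>x\<in>S. (if x = s then 1 else 0) * (f x::real)) = f s"
proof -
  assume "finite S" "s \<in> S"
  have "(\<Sum>x\<in>S. (if x = s then 1 else 0) * f x) = (\<Sum>x\<in>S. if x = s then f x else 0)"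
    by (rule sum.cong) auto
  then show ?thesis using \<open>finite S\<close> \<open>s \<in> S\<close> by simp
qed

lemma pure_mixed: "s \<in> S \<Longrightarrow> finite S \<Longrightarrow> mixed S (\<lambda>x. if x = s then 1 else 0)"
  unfolding mixed_def by simp

lemma key:
  assumes ne: "is_MSNE (Udg fd F) (Uag fa F) pd pa"
    and fd: "\<And>p. 0 \<le> p \<Longrightarrow> 0 \<le> fd p \<and> (fd p = 0 \<longleftrightarrow> p = 0)"
    and fa: "\<And>p. 0 \<le> p \<Longrightarrow> 0 \<le> fa p \<and> (fa p = 0 \<longleftrightarrow> p = 0)"
    and sg: "mixed Sd \<sigma>" "\<forall>t\<in>Sa. (\<Sum>sd\<in>Sd. \<sigma> sd * ud F sd t) = 0"
    and qq: "mixed Sa q" "\<forall>sd\<in>Sd. (\<Sum>t\<in>Sa. q t * ud F sd t) = 0"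
  shows "Udg fd F pd pa = 0 \<and> Uag fa F pd pa = 0"
proof -
  define D where "D sd = (\<Sum>t\<in>Sa. fd (pa t) * ud F sd t)" for sd
  define A where "A t = (\<Sum>sd\<in>Sd. fa (pd sd) * ua F sd t)" for t
  define M where "M = Udg fd F pd pa"
  define N where "N = Uag fa F pd pa"
  have mpd: "mixed Sd pd" and mpa: "mixed Sa pa"
    and bd: "\<And>pd'. mixed Sd pd' \<Longrightarrow> Udg fd F pd' pa \<le> M"
    and ba: "\<And>pa'. mixed Sa pa' \<Longrightarrow> Uag fa F pd pa' \<le> N"
    using ne unfolding is_MSNE_def M_def N_def by auto
  have Ud: "Udg fd F pd' pa = (\<Sum>sd\<in>Sd. pd' sd * D sd)" for pd'
    by (simp add: Udg_alt D_def)
  have Ua: "Uag fa F pd pa' = (\<Sum>t\<in>Sa. pa' t * A t)" for pa'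
    by (simp add: Uag_alt A_def)
  have Dle: "D sd \<le> M" if "sd \<in> Sd" for sd
  proof -
    have "Udg fd F (\<lambda>x. if x = sd then 1 else 0) pa \<le> M"
      using bd pure_mixed[OF that finSd] by blast
    then show ?thesis using that finSd by (simp add: Ud sum_ind)
  qed
  have Ale: "A t \<le> N" if "t \<in> Sa" for t
  proof -
    have "Uag fa F pd (\<lambda>x. if x = t then 1 else 0) \<le> N"
      using ba pure_mixed[OF that finSa] by blast
    then show ?thesis using that finSa by (simp add: Ua sum_ind)
  qed
  have M0: "0 \<le> M"
  proof -
    have "Udg fd F \<sigma> pa = (\<Sum>t\<in>Sa. fd (pa t) * (\<Sum>sd\<in>Sd. \<sigma> sd * ud F sd t))"
      unfolding Udg_def by (subst sum.swap) (simp add: sum_distrib_left ac_simps)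
    also have "\<dots> = 0" using sg(2) by simp
    finally show ?thesis using bd[OF sg(1)] by simp
  qed
  have N0: "0 \<le> N"
  proof -
    have "Uag fa F pd q = - (\<Sum>sd\<in>Sd. fa (pd sd) * (\<Sum>t\<in>Sa. q t * ud F sd t))"
      unfolding Uag_def ua_def by (subst sum.swap) (simp add: sum_distrib_left ac_simps sum_negf)
    also have "\<dots> = 0" using qq(2) by simp
    finally show ?thesis using ba[OF qq(1)] by simp
  qed
  have supd: "fa (pd sd) * D sd = fa (pd sd) * M" if "sd \<in> Sd" for sd
  proof -
    have "(\<Sum>s\<in>Sd. pd s * (M - D s)) = M * sum pd Sd - (\<Sum>s\<in>Sd. pd s * D s)"
      by (simp add: algebra_simps sum_subtractf sum_distrib_left)
    also have "\<dots> = 0" using mpd by (simp add: mixed_def Ud[symmetric] M_def)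
    finally have "(\<Sum>s\<in>Sd. pd s * (M - D s)) = 0" .
    moreover have "\<forall>s\<in>Sd. 0 \<le> pd s * (M - D s)" using mpd Dle by (simp add: mixed_def)
    ultimately have "\<forall>s\<in>Sd. pd s * (M - D s) = 0"
      using sum_nonneg_eq_0_iff[OF finSd, of "\<lambda>s. pd s * (M - D s)"] by simp
    then have "pd sd * (M - D sd) = 0" using that by simp
    then have "pd sd = 0 \<or> D sd = M" by auto
    then show ?thesis using fa[of 0] by auto
  qed
  have supa: "fd (pa t) * A t = fd (pa t) * N" if "t \<in> Sa" for t
  proof -
    have "(\<Sum>s\<in>Sa. pa s * (N - A s)) = N * sum pa Sa - (\<Sum>s\<in>Sa. pa s * A s)"
      by (simp add: algebra_simps sum_subtractf sum_distrib_left)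
    also have "\<dots> = 0" using mpa by (simp add: mixed_def Ua[symmetric] N_def)
    finally have "(\<Sum>s\<in>Sa. pa s * (N - A s)) = 0" .
    moreover have "\<forall>s\<in>Sa. 0 \<le> pa s * (N - A s)" using mpa Ale by (simp add: mixed_def)
    ultimately have "\<forall>s\<in>Sa. pa s * (N - A s) = 0"
      using sum_nonneg_eq_0_iff[OF finSa, of "\<lambda>s. pa s * (N - A s)"] by simp
    then have "pa t * (N - A t) = 0" using that by simp
    then have "pa t = 0 \<or> A t = N" by auto
    then show ?thesis using fd[of 0] by auto
  qed
  have cross: "(\<Sum>sd\<in>Sd. fa (pd sd) * D sd) = - (\<Sum>t\<in>Sa. fd (pa t) * A t)"
  proof -
    have "(\<Sum>sd\<in>Sd. fa (pd sd) * D sd) = (\<Sum>sd\<in>Sd. \<Sum>t\<in>Sa. fa (pd sd) * fd (pa t) * ud F sd t)"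
      unfolding D_def by (simp add: sum_distrib_left ac_simps)
    also have "\<dots> = (\<Sum>t\<in>Sa. \<Sum>sd\<in>Sd. fa (pd sd) * fd (pa t) * ud F sd t)"
      by (rule sum.swap)
    also have "\<dots> = - (\<Sum>t\<in>Sa. fd (pa t) * A t)"
      unfolding A_def ua_def by (simp add: sum_distrib_left sum_negf ac_simps)
    finally show ?thesis .
  qed
  have "(\<Sum>sd\<in>Sd. fa (pd sd) * D sd) = M * (\<Sum>sd\<in>Sd. fa (pd sd))"
    unfolding sum_distrib_left using supd by (intro sum.cong) (auto simp: mult.commute)
  moreover have "(\<Sum>t\<in>Sa. fd (pa t) * A t) = N * (\<Sum>t\<in>Sa. fd (pa t))"
    unfolding sum_distrib_left using supa by (intro sum.cong) (auto simp: mult.commute)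
  ultimately have eq: "M * (\<Sum>sd\<in>Sd. fa (pd sd)) + N * (\<Sum>t\<in>Sa. fd (pa t)) = 0"
    using cross by simp
  have Ypos: "0 < (\<Sum>sd\<in>Sd. fa (pd sd))"
  proof -
    obtain s where s: "s \<in> Sd" "pd s \<noteq> 0"
      using mpd unfolding mixed_def by (metis sum.neutral zero_neq_one)
    have "0 < fa (pd s)" using fa[of "pd s"] s mpd unfolding mixed_def by force
    then show ?thesis using s finSd fa mpd unfolding mixed_def
      by (intro sum_pos2[where i=s]) auto
  qed
  have Xpos: "0 < (\<Sum>t\<in>Sa. fd (pa t))"
  proof -
    obtain s where s: "s \<in> Sa" "pa s \<noteq> 0"
      using mpa unfolding mixed_def by (metis sum.neutral zero_neq_one)
    have "0 < fd (pa s)" using fd[of "pa s"] s mpa unfolding mixed_def by force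
    then show ?thesis using s finSa fd mpa unfolding mixed_def
      by (intro sum_pos2[where i=s]) auto
  qed
  have "0 \<le> M * (\<Sum>sd\<in>Sd. fa (pd sd))" "0 \<le> N * (\<Sum>t\<in>Sa. fd (pa t))"
    using M0 N0 Ypos Xpos by auto
  then have "M * (\<Sum>sd\<in>Sd. fa (pd sd)) = 0" "N * (\<Sum>t\<in>Sa. fd (pa t)) = 0" using eq by linarith+
  then show ?thesis using Ypos Xpos by (simp add: M_def N_def)
qed

lemma exist_NE:
  assumes "mixed Sd pd" "mixed Sa pa"
    and "\<forall>t\<in>Sa. fd (pa t) = l * q t" "\<forall>s\<in>Sd. fa (pd s) = m * \<sigma> s"
    and eq: "\<forall>sd\<in>Sd. (\<Sum>t\<in>Sa. q t * ud F sd t) = 0"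
    and es: "\<forall>t\<in>Sa. (\<Sum>sd\<in>Sd. \<sigma> sd * ud F sd t) = 0"
  shows "is_MSNE (Udg fd F) (Uag fa F) pd pa"
proof -
  have "Udg fd F pd' pa = 0" for pd'
  proof -
    have "Udg fd F pd' pa = (\<Sum>sd\<in>Sd. pd' sd * (l * (\<Sum>t\<in>Sa. q t * ud F sd t)))"
      unfolding Udg_alt using assms(3) by (simp add: sum_distrib_left mult.assoc)
    then show ?thesis using eq by simp
  qed
  moreover have "Uag fa F pd pa' = 0" for pa'
  proof -
    have "Uag fa F pd pa' = (\<Sum>t\<in>Sa. pa' t * (- m * (\<Sum>sd\<in>Sd. \<sigma> sd * ud F sd t)))"
      unfolding Uag_alt ua_def using assms(4) by (simp add: sum_distrib_left mult.assoc sum_negf)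
    then show ?thesis using es by simp
  qed
  ultimately show ?thesis using assms(1,2) unfolding is_MSNE_def by simp
qed



definition winv :: "real \<Rightarrow> real \<Rightarrow> real" where
  "winv a y = (if y = 0 then 0 else exp (- ((- ln y) powr (1/a))))"

lemma wgt_winv: assumes "0 < a" "0 \<le> y" "y \<le> 1" shows "wgt a (winv a y) = y"
proof (cases "y = 0")
  case True then show ?thesis by (simp add: winv_def wgt_def)
next
  case False
  then have y: "0 < y" using assms by simp
  have nl: "0 \<le> - ln y" using y assms by simp
  have "((- ln y) powr (1/a)) powr a = - ln y"
    using nl assms by (simp add: powr_powr powr_one)
  then show ?thesis using y False by (simp add: winv_def wgt_def)
qed

lemma winv_nonneg: "0 \<le> winv a y" by (simp add: winv_def)

lemma winv_small: assumes "0 < a" "a \<le> 1" "0 < y" "y \<le> exp (-1)" shows "winv a y \<le> y"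
proof -
  have "ln y \<le> -1" using assms by (metis ln_exp ln_le_cancel_iff exp_gt_zero)
  then have g1: "1 \<le> - ln y" by simp
  have "1 \<le> 1/a" using assms by simp
  then have "(- ln y) powr 1 \<le> (- ln y) powr (1/a)" using g1 by (intro powr_mono) auto
  then have "- ln y \<le> (- ln y) powr (1/a)" using g1 by (simp add: powr_one)
  then have "exp (- ((- ln y) powr (1/a))) \<le> exp (ln y)" by simp
  then show ?thesis using assms by (simp add: winv_def)
qed

lemma winv_cont: assumes "0 < a" "0 \<le> c" "0 < u" "v * c \<le> 1"
  shows "continuous_on {u..v} (\<lambda>l. winv a (l * c))"
proof (cases "c = 0")
  case True then show ?thesis by (simp add: winv_def)
next
  case False
  then have c: "0 < c" using assms by simp
  have pos: "0 < x * c \<and> x * c \<le> 1" if x: "x \<in> {u..v}" for x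
  proof -
    have xv: "x * c \<le> v * c" using x c by (simp add: mult_right_mono)
    have "0 < x * c" using x c assms by simp
    moreover have "x * c \<le> 1" using xv assms(4) by linarith
    ultimately show ?thesis by simp
  qed
  have lnc: "continuous_on {u..v} (\<lambda>l. - ln (l * c))"
  proof (intro continuous_intros ballI)
    fix x assume "x \<in> {u..v}"
    then show "x * c \<noteq> 0" using pos[of x] by linarith
  qed
  have "continuous_on {u..v} (\<lambda>l. (- ln (l * c)) powr (1/a))"
    by (rule continuous_on_powr'[OF lnc continuous_on_const]) (use pos assms in auto)
  then have "continuous_on {u..v} (\<lambda>l. exp (- ((- ln (l * c)) powr (1/a))))"
    by (intro continuous_on_exp continuous_on_minus)
  then show ?thesis
    by (rule continuous_on_cong[THEN iffD1, rotated 2]) (use c assms in \<open>auto simp: winv_def\<close>)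
qed

lemma exists_scaled:
  fixes S :: "'s set" and c :: "'s \<Rightarrow> real"
  assumes a: "0 < a" "a \<le> 1" and S: "finite S" and c: "\<forall>s\<in>S. 0 \<le> c s" "sum c S = 1"
  shows "\<exists>p l. mixed S p \<and> 0 < l \<and> (\<forall>s\<in>S. wgt a (p s) = l * c s)"
proof -
  have ne: "S \<noteq> {}" using c by auto
  define m where "m = Max (c ` S)"
  have "m \<in> c ` S" using S ne unfolding m_def by simp
  then obtain s0 where s0: "s0 \<in> S" "c s0 = m" by auto
  have cm: "c s \<le> m" if "s \<in> S" for s using S that unfolding m_def by simp
  have c1: "c s \<le> 1" if "s \<in> S" for s
    using member_le_sum[of s S c] c that S by simp
  have mpos: "0 < m"
  proof (rule ccontr)
    assume "\<not> 0 < m"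
    then have "\<forall>s\<in>S. c s = 0" using cm c by (meson antisym not_le order_trans)
    then show False using c by simp
  qed
  have m1: "m \<le> 1" using c1 s0 by auto
  define h where "h l = (\<Sum>s\<in>S. winv a (l * c s))" for l
  define l0 where "l0 = exp (-1::real)"
  have l0: "0 < l0" "l0 < 1" by (auto simp: l0_def)
  have l0m: "l0 \<le> 1/m" using l0 m1 mpos by (simp add: field_simps) (metis less_eq_real_def mult_le_one)
  have "h l0 \<le> (\<Sum>s\<in>S. l0 * c s)" unfolding h_def
  proof (rule sum_mono)
    fix s assume s: "s \<in> S"
    show "winv a (l0 * c s) \<le> l0 * c s"
    proof (cases "c s = 0")
      case True then show ?thesis by (simp add: winv_def)
    next
      case False
      have "l0 * c s \<le> l0 * 1" using c1[OF s] l0 by (intro mult_left_mono) auto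
      have "0 < c s" using c s False by force
      then show ?thesis using winv_small[OF a, of "l0 * c s"] l0 c s \<open>l0 * c s \<le> l0 * 1\<close>
        by (simp add: l0_def)
    qed
  qed
  also have "\<dots> = l0" using c by (simp add: sum_distrib_left[symmetric])
  finally have h0: "h l0 \<le> 1" using l0 by simp
  have "winv a (1/m * c s0) = 1" using s0 mpos by (simp add: winv_def)
  then have h1: "1 \<le> h (1/m)" unfolding h_def
    using member_le_sum[of s0 S "\<lambda>s. winv a (1/m * c s)"] s0 S winv_nonneg by simp
  have cont: "continuous_on {l0..1/m} h" unfolding h_def
  proof (intro continuous_on_sum)
    fix s assume s: "s \<in> S"
    have "1/m * c s \<le> 1" using cm[OF s] mpos by (simp add: field_simps)
    then show "continuous_on {l0..1/m} (\<lambda>l. winv a (l * c s))"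
      using winv_cont[OF a(1), of "c s" l0 "1/m"] c s l0 by auto
  qed
  obtain l where l: "l0 \<le> l" "l \<le> 1/m" "h l = 1" using IVT'[OF h0 h1 l0m cont] by auto
  define p where "p s = winv a (l * c s)" for s
  have lpos: "0 < l" using l l0 by simp
  have "mixed S p" using l unfolding mixed_def p_def h_def by (simp add: winv_nonneg)
  moreover have "\<forall>s\<in>S. wgt a (p s) = l * c s"
  proof
    fix s assume s: "s \<in> S"
    have "l * c s \<le> 1/m * c s" using l c s by (intro mult_right_mono) auto
    also have "\<dots> \<le> 1" using cm[OF s] mpos by (simp add: field_simps)
    finally show "wgt a (p s) = l * c s" unfolding p_def using lpos c s a
      by (intro wgt_winv) auto
  qed
  ultimately show ?thesis using lpos by blast
qed



lemma root: "\<exists>F::real. 3 \<le> F \<and> F \<le> 4 \<and> 1/(F+1)+2/(F+2)+4/(F+4)+12/(F+12) = 2"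
proof -
  have "\<exists>x. 3 \<le> x \<and> x \<le> 4 \<and> (\<lambda>F::real. 1/(F+1)+2/(F+2)+4/(F+4)+12/(F+12)) x = 2"
  proof (rule IVT2')
    show "continuous_on {3..4} (\<lambda>F::real. 1/(F+1)+2/(F+2)+4/(F+4)+12/(F+12))"
      by (intro continuous_intros) auto
  qed auto
  then show ?thesis by simp
qed

lemma doub: "({a,b} = {c,d}) = (a = c \<and> b = d \<or> a = d \<and> b = c)"
  by (rule doubleton_eq_iff)

lemma concrete:
  assumes F: "3 \<le> F" "F \<le> 4" and hF: "1/(F+1)+2/(F+2)+4/(F+4)+12/(F+12) = 2"
  shows "\<exists>q \<sigma>. mixed Sa q \<and> mixed Sd \<sigma> \<and> (\<forall>sd\<in>Sd. (\<Sum>t\<in>Sa. q t * ud F sd t) = 0)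
            \<and> (\<forall>t\<in>Sa. (\<Sum>sd\<in>Sd. \<sigma> sd * ud F sd t) = 0)"
proof -
  define eA where "eA = 1/(F+1)"
  define eB where "eB = 1/(F+2)"
  define eC where "eC = 1/(F+4)"
  define eD where "eD = 1/(F+12)"
  have fA: "eA * F = 1 - eA" and fB: "eB * F = 1 - 2*eB" and fC: "eC * F = 1 - 4*eC"
    and fD: "eD * F = 1 - 12*eD"
    using F by (simp_all add: eA_def eB_def eC_def eD_def field_simps)
  have h: "eA + 2*eB + 4*eC + 12*eD = 2" using hF by (simp add: eA_def eB_def eC_def eD_def)
  have pos: "0 < eA" "0 < eB" "0 < eC" "0 < eD" using F by (simp_all add: eA_def eB_def eC_def eD_def)
  have BD: "2*eB + 12*eD \<ge> 1"
  proof -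
    have "F * F \<le> 4 * 4" using F by (intro mult_mono) auto
    moreover have "0 < F * F + (24 + F * 14)" using F by (simp add: add_pos_pos)
    ultimately show ?thesis using F by (simp add: eB_def eD_def field_simps le_divide_eq_1_pos)
  qed
  have CD: "4*eC + 12*eD \<ge> 1"
  proof -
    have "F * F \<le> 4 * 4" using F by (intro mult_mono) auto
    moreover have "0 < F * F + (48 + F * 16)" using F by (simp add: add_pos_pos)
    ultimately show ?thesis using F by (simp add: eC_def eD_def field_simps le_divide_eq_1_pos)
  qed
  have D1: "12 * eD \<le> 1" using F by (simp add: eD_def field_simps)
  define e where "e t = (case t of TA \<Rightarrow> eA | TB \<Rightarrow> eB | TC \<Rightarrow> eC | TD \<Rightarrow> eD)" for t
  define k where "k = 1 / (eA + eB + eC + eD)"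
  define q where "q t = k * e t" for t
  define \<sigma> where "\<sigma> s = (if s = {TA,TD} then eA else if s = {TB,TC} then 1 - 12*eD
      else if s = {TB,TD} then 2*eB + 12*eD - 1 else if s = {TC,TD} then 4*eC + 12*eD - 1 else 0)" for s
  have nz: "eA + eB + eC + eD \<noteq> 0" using pos by simp
  have s1: "(\<Sum>t\<in>Sa. q t) = k*(eA+eB+eC+eD)" by (simp add: Sa_def q_def e_def algebra_simps)
  have s2: "k*(eA+eB+eC+eD) = 1" using nz by (simp add: k_def)
  have kp: "0 < k" using pos by (simp add: k_def)
  have qn: "0 \<le> q t" for t using kp pos by (cases t) (simp_all add: q_def e_def)
  have mq: "mixed Sa q" unfolding mixed_def using s1 s2 qn by simp
  have ms: "mixed Sd \<sigma>"
    using pos BD CD D1 h unfolding mixed_def Sd_def \<sigma>_def by (simp add: doub)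
  have eq: "\<forall>sd\<in>Sd. (\<Sum>t\<in>Sa. q t * ud F sd t) = 0"
  proof
    fix sd assume "sd \<in> Sd"
    have "(\<Sum>t\<in>Sa. q t * ud F sd t) = k * (\<Sum>t\<in>Sa. e t * ud F sd t)"
      by (simp add: q_def sum_distrib_left mult.assoc)
    moreover have "(\<Sum>t\<in>Sa. e t * ud F sd t) = 0"
      using \<open>sd \<in> Sd\<close> fA fB fC fD h unfolding Sd_def Sa_def ud_def e_def
      by (auto simp: algebra_simps)
    ultimately show "(\<Sum>t\<in>Sa. q t * ud F sd t) = 0" by simp
  qed
  have h2: "F * eA + F * (eB * 2) + F * (eC * 4) + F * (eD * 12) = F * 2"
    using arg_cong[OF h, of "\<lambda>x. F * x"] by (simp add: algebra_simps)
  have es: "\<forall>t\<in>Sa. (\<Sum>sd\<in>Sd. \<sigma> sd * ud F sd t) = 0"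
    using fA fB fC fD h h2 unfolding Sd_def Sa_def ud_def \<sigma>_def
    by (auto simp: doub algebra_simps)
  show ?thesis using mq ms eq es by blast
qed


lemma wgt_prop: "0 \<le> p \<Longrightarrow> 0 \<le> wgt a p \<and> (wgt a p = 0 \<longleftrightarrow> p = 0)"
  by (simp add: wgt_def)

theorem theorem3:
  shows "(\<exists>F. (\<exists>pd pa. MSNE_EUT F pd pa) \<and>
              (\<forall>pd pa. MSNE_EUT F pd pa \<longrightarrow> U_EUT_d F pd pa = 0 \<and> U_EUT_a F pd pa = 0))
       \<and> (\<forall>\<alpha>d \<alpha>a. 0 < \<alpha>d \<and> \<alpha>d \<le> 1 \<and> 0 < \<alpha>a \<and> \<alpha>a \<le> 1 \<longrightarrow>
           (\<exists>F. (\<exists>pd pa. MSNE_PT \<alpha>d \<alpha>a F pd pa) \<and>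
                (\<forall>pd pa. MSNE_PT \<alpha>d \<alpha>a F pd pa \<longrightarrow>
                   U_PT_d \<alpha>d F pd pa = 0 \<and> U_PT_a \<alpha>a F pd pa = 0)))"
proof -
  obtain F :: real where F: "3 \<le> F" "F \<le> 4" "1/(F+1)+2/(F+2)+4/(F+4)+12/(F+12) = 2"
    using root by blast
  obtain q \<sigma> where mq: "mixed Sa q" and ms: "mixed Sd \<sigma>"
    and eq: "\<forall>sd\<in>Sd. (\<Sum>t\<in>Sa. q t * ud F sd t) = 0"
    and es: "\<forall>t\<in>Sa. (\<Sum>sd\<in>Sd. \<sigma> sd * ud F sd t) = 0"
    using concrete[OF F] by blast
  have id_prop: "\<And>p. 0 \<le> (p::real) \<Longrightarrow> 0 \<le> p \<and> (p = 0 \<longleftrightarrow> p = 0)" by simp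
  have E1: "\<exists>pd pa. MSNE_EUT F pd pa"
  proof -
    have "is_MSNE (Udg (\<lambda>x. x) F) (Uag (\<lambda>x. x) F) \<sigma> q"
      by (rule exist_NE[OF ms mq _ _ eq es, where l=1 and m=1]) auto
    then show ?thesis unfolding MSNE_EUT_def EUT_eq by blast
  qed
  have E2: "\<forall>pd pa. MSNE_EUT F pd pa \<longrightarrow> U_EUT_d F pd pa = 0 \<and> U_EUT_a F pd pa = 0"
    unfolding MSNE_EUT_def EUT_eq
    using key[OF _ id_prop id_prop ms es mq eq] by blast
  have P: "(\<exists>pd pa. MSNE_PT ad aa F pd pa) \<and>
                (\<forall>pd pa. MSNE_PT ad aa F pd pa \<longrightarrow>
                   U_PT_d ad F pd pa = 0 \<and> U_PT_a aa F pd pa = 0)"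
    if a: "0 < ad" "ad \<le> 1" "0 < aa" "aa \<le> 1" for ad aa
  proof
    obtain pa l where pa: "mixed Sa pa" "\<forall>t\<in>Sa. wgt ad (pa t) = l * q t"
      using exists_scaled[OF a(1,2) finSa, of q] mq unfolding mixed_def by blast
    obtain pd m where pd: "mixed Sd pd" "\<forall>s\<in>Sd. wgt aa (pd s) = m * \<sigma> s"
      using exists_scaled[OF a(3,4) finSd, of \<sigma>] ms unfolding mixed_def by blast
    have "is_MSNE (Udg (wgt ad) F) (Uag (wgt aa) F) pd pa"
      by (rule exist_NE[OF pd(1) pa(1) pa(2) pd(2) eq es])
    then show "\<exists>pd pa. MSNE_PT ad aa F pd pa" unfolding MSNE_PT_def PT_eq by blast
  next
    show "\<forall>pd pa. MSNE_PT ad aa F pd pa \<longrightarrow> U_PT_d ad F pd pa = 0 \<and> U_PT_a aa F pd pa = 0"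
      unfolding MSNE_PT_def PT_eq
      using key[OF _ wgt_prop[where a=ad] wgt_prop[where a=aa] ms es mq eq] by blast
  qed
  show ?thesis using E1 E2 P by blast
qed

end
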